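(* Let $G=(V,E)$ with $|V|\ge 3$, $N\ge3$, $\varepsilon\in(0,\frac1{N-1}]$ and $s_0\in S_{nc}$. Then for every $\gamma\in(0,1)$, every trigger strategies profile $\bar\sigma$ of $\Gamma_N(G|s_0,\gamma,\varepsilon)$ is nonpositional.
   Context: Setting. $G=(V,E)$ is a finite, simple, connected, undirected graph; $N\ge 3$ is an integer; $\gamma\in(0,1)$ and $\varepsilon\in[0,\frac1{N-1}]$ are parameters. There are $N$ tokens: cops $C_1,\dots,C_{N-1}$ (tokens $1,\dots,N-1$) and the robber $R$ (token $N$). A state is $s=(x^1,\dots,x^N,n)$ where $x^i\in V$ is the position of token $i$ and $n\in\{1,\dots,N\}$ is the token that moves next; $S^n$ denotes the set of states with token $n$ to move. A state is a capture state if $x^i=x^N$ for some $i\le N-1$; $S_{nc}$ is the set of noncapture states. In each turn exactly one token, the one to move, moves to a vertex of its closed neighbourhood (it may stay put); the order of moves is $C_1,C_2,\dots,C_{N-1},R,C_1,\dots$. Starting from an initial state $s_0\in S_{nc}$ at time $0$, the capture time is the first time $t$ at which a capture state occurs (infinite if never); after capture the game is over. Auxiliary games. For $m\in\{1,\dots,N\}$, $\Gamma_N^m(G|s_0,\gamma,\varepsilon)$ is the two-player zero-sum game in which player $P_m$ controls token $m$ and player $P_{-m}$ controls all other tokens, with the following payoff to $P_m$ ($P_{-m}$ receives its negative): $0$ if no capture ever occurs; if capture occurs at time $t$: for $m=N$, $-\gamma^t$; for $m\le N-1$, $\frac{1-\varepsilon}{K}\gamma^t$ if exactly $K\in\{1,\dots,N-2\}$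 cops, including $C_m$, are on the robber's vertex, $\frac{\varepsilon}{N-K-1}\gamma^t$ if exactly $K\in\{1,\dots,N-2\}$ cops, not including $C_m$, are on the robber's vertex, and $\frac{\gamma^t}{N-1}$ if all $N-1$ cops are on the robber's vertex. $\Gamma^N_N$ is the modified cops-and-robber (CR) game. A pure positional strategy for token $n$ maps each state in $S^n\cap S_{nc}$ to an allowed next vertex. Each $\Gamma^m_N$ has optimal pure positional strategies (optimal from every initial state). For $m,n\in\{1,\dots,N\}$, $\phi^n_m$ denotes the strategy of token $n$ in a chosen pair of optimal pure positional strategies of $\Gamma^m_N$ (so $\phi^m_m$ is $P_m$'s optimal strategy and $(\phi^n_m)_{n\ne m}$ is $P_{-m}$'s). $\widehat\Sigma^n$ is the set of pure positional strategies of token $n$ that are components of optimal strategy pairs of $\Gamma^N_N$ (CR-optimal strategies). Trigger strategies. Given a choice of $(\phi^n_m)_{n,m}$, the trigger strategies profile $\bar\sigma=(\bar\sigma^1,\dots,\bar\sigma^N)$ of the $N$-player SCAR game $\Gamma_N(G|s_0,\gamma,\varepsilon)$ (same board and moves; player $n$ controls token $n$) is: token $n$, at current state $s$, plays $\phi^n_n(s)$ as long as every other player $m$ has followed $\phi^m_m$, and plays $\phi^n_m(s)$ from the moment a player $m\neq n$ deviates from $\phi^m_m$. Different choices of the optimal strategies give different trigger strategies profiles. $\bar\sigma$ is called positional if for all $n,m\in\{1,\dots,N\}$ there is $\widehat\sigma^n\in\widehat\Sigma^n$ with $\phi^n_m(s)=\widehat\sigma^n(s)$ for every state $s\in S^n\cap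 S_{nc}$ reachable from $s_0$ by a finite sequence of legal moves passing only through noncapture states; otherwise $\bar\sigma$ is nonpositional. *)

theory Defs
  imports Main "HOL.Real"
begin

definition simple_graph :: "'v set \<Rightarrow> ('v \<Rightarrow> 'v \<Rightarrow> bool) \<Rightarrow> bool" where
  "simple_graph V E \<longleftrightarrow> finite V \<and> (\<forall>x y. E x y \<longrightarrow> x \<in> V \<and> y \<in> V)
     \<and> (\<forall>x y. E x y \<longrightarrow> E y x) \<and> (\<forall>x. \<not> E x x)"

definition connected_graph :: "'v set \<Rightarrow> ('v \<Rightarrow> 'v \<Rightarrow> bool) \<Rightarrow> bool" where
  "connected_graph V E \<longleftrightarrow> (\<forall>x\<in>V. \<forall>y\<in>V. E\<^sup>*\<^sup>* x y)"

definition cnbhd :: "'v set \<Rightarrow> ('v \<Rightarrow> 'v \<Rightarrow> bool) \<Rightarrow> 'v \<Rightarrow> 'v set" where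
  "cnbhd V E v = {w \<in> V. w = v \<or> E v w}"

text \<open>A state (x^1,...,x^N,n) is a list of N positions (token i at list index i-1)
 together with the token n to move. Tokens 1..N-1 are cops, token N the robber.\<close>

type_synonym 'v state = "'v list \<times> nat"
type_synonym 'v strat = "'v state \<Rightarrow> 'v"

definition pos :: "'v state \<Rightarrow> nat \<Rightarrow> 'v" where
  "pos s i = fst s ! (i - 1)"

definition mover :: "'v state \<Rightarrow> nat" where
  "mover s = snd s"

definition states :: "'v set \<Rightarrow> nat \<Rightarrow> 'v state set" where
  "states V N = {s. length (fst s) = N \<and> set (fst s) \<subseteq> V \<and> snd s \<in> {1..N}}"

definition captured_cops :: "nat \<Rightarrow> 'v state \<Rightarrow> nat set" where
  "captured_cops N s = {i \<in> {1..N-1}. pos s i = pos s N}"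

definition is_capture :: "nat \<Rightarrow> 'v state \<Rightarrow> bool" where
  "is_capture N s \<longleftrightarrow> (\<exists>i\<in>{1..N-1}. pos s i = pos s N)"

definition move :: "nat \<Rightarrow> 'v state \<Rightarrow> 'v \<Rightarrow> 'v state" where
  "move N s v = ((fst s)[mover s - 1 := v], mover s mod N + 1)"

definition legal_strat :: "'v set \<Rightarrow> ('v \<Rightarrow> 'v \<Rightarrow> bool) \<Rightarrow> nat \<Rightarrow> nat \<Rightarrow> 'v strat \<Rightarrow> bool" where
  "legal_strat V E N n \<sigma> \<longleftrightarrow>
     (\<forall>s\<in>states V N. mover s = n \<and> \<not> is_capture N s \<longrightarrow> \<sigma> s \<in> cnbhd V E (pos s n))"

definition legal_profile :: "'v set \<Rightarrow> ('v \<Rightarrow> 'v \<Rightarrow> bool) \<Rightarrow> nat \<Rightarrow> (nat \<Rightarrow> 'v strat) \<Rightarrow> bool" where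
  "legal_profile V E N \<pi> \<longleftrightarrow> (\<forall>n\<in>{1..N}. legal_strat V E N n (\<pi> n))"

fun play :: "nat \<Rightarrow> (nat \<Rightarrow> 'v strat) \<Rightarrow> 'v state \<Rightarrow> nat \<Rightarrow> 'v state" where
  "play N \<pi> s0 0 = s0"
| "play N \<pi> s0 (Suc t) = (let s = play N \<pi> s0 t in move N s (\<pi> (mover s) s))"

definition capture_reward :: "nat \<Rightarrow> real \<Rightarrow> nat \<Rightarrow> 'v state \<Rightarrow> real" where
  "capture_reward N \<epsilon> m s =
     (let K = card (captured_cops N s) in
      if m = N then -1
      else if K = N - 1 then 1 / real (N - 1)
      else if m \<in> captured_cops N s then (1 - \<epsilon>) / real K
      else \<epsilon> / real (N - K - 1))"

definition payoff :: "nat \<Rightarrow> real \<Rightarrow> real \<Rightarrow> nat \<Rightarrow> (nat \<Rightarrow> 'v strat) \<Rightarrow> 'v state \<Rightarrow> real" where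
  "payoff N \<gamma> \<epsilon> m \<pi> s0 =
     (if \<exists>t. is_capture N (play N \<pi> s0 t)
      then (let t = (LEAST t. is_capture N (play N \<pi> s0 t))
            in \<gamma> ^ t * capture_reward N \<epsilon> m (play N \<pi> s0 t))
      else 0)"

text \<open>A pair of optimal pure positional strategies of Gamma^m_N (optimal from every
 noncapture initial state): P_m controls token m, P_{-m} all other tokens and
 receives the negative payoff (saddle point condition).\<close>
definition optimal_pair :: "'v set \<Rightarrow> ('v \<Rightarrow> 'v \<Rightarrow> bool) \<Rightarrow> nat \<Rightarrow> real \<Rightarrow> real \<Rightarrow> nat
     \<Rightarrow> (nat \<Rightarrow> 'v strat) \<Rightarrow> bool" where
  "optimal_pair V E N \<gamma> \<epsilon> m \<pi> \<longleftrightarrow> legal_profile V E N \<pi> \<and>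
     (\<forall>s0\<in>states V N. \<not> is_capture N s0 \<longrightarrow>
        (\<forall>\<sigma>. legal_strat V E N m \<sigma> \<longrightarrow> payoff N \<gamma> \<epsilon> m (\<pi>(m := \<sigma>)) s0 \<le> payoff N \<gamma> \<epsilon> m \<pi> s0)
      \<and> (\<forall>\<rho>. legal_profile V E N \<rho> \<longrightarrow> payoff N \<gamma> \<epsilon> m \<pi> s0 \<le> payoff N \<gamma> \<epsilon> m (\<rho>(m := \<pi> m)) s0))"

definition CR_optimal :: "'v set \<Rightarrow> ('v \<Rightarrow> 'v \<Rightarrow> bool) \<Rightarrow> nat \<Rightarrow> real \<Rightarrow> real \<Rightarrow> nat \<Rightarrow> 'v strat set" where
  "CR_optimal V E N \<gamma> \<epsilon> n = {\<sigma>. \<exists>\<pi>. optimal_pair V E N \<gamma> \<epsilon> N \<pi> \<and> \<pi> n = \<sigma>}"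

text \<open>States reachable from s0 by legal moves passing only through noncapture states
 (the final state may be a capture state; it is excluded where used).\<close>
inductive_set reach_nc :: "'v set \<Rightarrow> ('v \<Rightarrow> 'v \<Rightarrow> bool) \<Rightarrow> nat \<Rightarrow> 'v state \<Rightarrow> 'v state set"
  for V E N s0 where
  start: "s0 \<in> reach_nc V E N s0"
| step: "s \<in> reach_nc V E N s0 \<Longrightarrow> \<not> is_capture N s \<Longrightarrow> v \<in> cnbhd V E (pos s (mover s))
          \<Longrightarrow> move N s v \<in> reach_nc V E N s0"

text \<open>phi n m is the strategy phi^n_m of token n in the chosen optimal pair of Gamma^m_N.
 The trigger strategies profile built from phi is positional iff the following holds.\<close>
definition trigger_positional :: "'v set \<Rightarrow> ('v \<Rightarrow> 'v \<Rightarrow> bool) \<Rightarrow> nat \<Rightarrow> real \<Rightarrow> real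
     \<Rightarrow> 'v state \<Rightarrow> (nat \<Rightarrow> nat \<Rightarrow> 'v strat) \<Rightarrow> bool" where
  "trigger_positional V E N \<gamma> \<epsilon> s0 \<phi> \<longleftrightarrow>
     (\<forall>n\<in>{1..N}. \<forall>m\<in>{1..N}. \<exists>\<sigma>\<in>CR_optimal V E N \<gamma> \<epsilon> n.
        \<forall>s\<in>reach_nc V E N s0. mover s = n \<and> \<not> is_capture N s \<longrightarrow> \<phi> n m s = \<sigma> s)"

end

theory Submission
  imports Defs
begin


definition cinv :: "'v set \<Rightarrow> nat \<Rightarrow> 'v list \<Rightarrow> bool" where
  "cinv V N xs \<longleftrightarrow> length xs = N \<and> set xs \<subseteq> V \<and> (\<forall>i\<in>{1..N-1}. xs!(i-1) \<noteq> xs!(N-1))"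

definition Rc :: "'v set \<Rightarrow> ('v \<Rightarrow> 'v \<Rightarrow> bool) \<Rightarrow> nat \<Rightarrow> 'v state \<Rightarrow> 'v list \<Rightarrow> bool" where
  "Rc V E N s0 xs \<longleftrightarrow> (\<forall>k\<in>{1..N}. (xs,k) \<in> reach_nc V E N s0)"

lemma pos_pair[simp]: "pos (xs,k) i = xs!(i-1)" by (simp add: pos_def)
lemma mover_pair[simp]: "mover (xs,k) = k" by (simp add: mover_def)
lemma move_pair[simp]: "move N (xs,k) v = (xs[k-1:=v], k mod N + 1)" by (simp add: move_def)

lemma inv_nc: "cinv V N xs \<Longrightarrow> \<not> is_capture N (xs,k)"
  by (auto simp: cinv_def is_capture_def)

lemma inv_nth_V: "cinv V N xs \<Longrightarrow> i < N \<Longrightarrow> xs!i \<in> V"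
  by (auto simp: cinv_def)

lemma cycle:
  assumes "(xs,k0) \<in> reach_nc V E N s0" "k0 \<in> {1..N}" "cinv V N xs"
  shows "Rc V E N s0 xs"
proof -
  have st: "(xs, k mod N + 1) \<in> reach_nc V E N s0" if "(xs,k) \<in> reach_nc V E N s0" "k \<in> {1..N}" for k
  proof -
    have v: "xs!(k-1) \<in> cnbhd V E (pos (xs,k) (mover (xs,k)))"
      using inv_nth_V[OF assms(3), of "k-1"] that(2) by (auto simp: cnbhd_def)
    from reach_nc.step[OF that(1) inv_nc[OF assms(3)] v] show ?thesis by simp
  qed
  have all: "(xs, (k0-1+d) mod N + 1) \<in> reach_nc V E N s0" for d
  proof (induction d)
    case 0
    have "(k0-1) mod N = k0 - 1" using assms(2) by auto
    then show ?case using assms(1,2) by simp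
  next
    case (Suc d)
    have N: "N > 0" using assms(2) by auto
    have "(xs, ((k0-1+d) mod N + 1) mod N + 1) \<in> reach_nc V E N s0"
      using st[OF Suc] N by (simp add: Suc_leI)
    moreover have "((k0-1+d) mod N + 1) mod N = (k0-1+Suc d) mod N"
      by (simp add: mod_Suc_eq)
    ultimately show ?case by simp
  qed
  show ?thesis unfolding Rc_def
  proof
    fix k assume k: "k \<in> {1..N}"
    have "(k0 - 1 + (N + k - k0)) mod N + 1 = k"
    proof -
      have "k0 - 1 + (N + k - k0) = N + (k-1)" using k assms(2) by auto
      moreover have "(N + (k-1)) mod N = k - 1"
      proof -
        have "(N + (k-1)) mod N = (k-1) mod N" by (simp only: mod_add_self1)
        also have "\<dots> = k - 1" using k by (intro mod_less) auto
        finally show ?thesis .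
      qed
      ultimately have "(k0 - 1 + (N + k - k0)) mod N = k - 1" by simp
      then show ?thesis using k by simp
    qed
    then show "(xs,k) \<in> reach_nc V E N s0" using all[of "N + k - k0"] by simp
  qed
qed

lemma Rstep:
  assumes "Rc V E N s0 xs" "k \<in> {1..N}" "v \<in> cnbhd V E (xs!(k-1))" "cinv V N xs" "cinv V N (xs[k-1:=v])"
  shows "Rc V E N s0 (xs[k-1:=v])"
proof -
  have "(xs,k) \<in> reach_nc V E N s0" using assms(1,2) by (auto simp: Rc_def)
  from reach_nc.step[OF this inv_nc[OF assms(4)]] assms(3)
  have "(xs[k-1:=v], k mod N + 1) \<in> reach_nc V E N s0" by simp
  moreover have "k mod N + 1 \<in> {1..N}" using assms(2)
    by (simp add: Suc_leI)
  ultimately show ?thesis using cycle assms(5) by blast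
qed




lemma payoff_at:
  assumes "is_capture N (play N \<pi> s t0)" "\<And>t. t < t0 \<Longrightarrow> \<not> is_capture N (play N \<pi> s t)"
  shows "payoff N \<gamma> \<epsilon> m \<pi> s = \<gamma>^t0 * capture_reward N \<epsilon> m (play N \<pi> s t0)"
proof -
  have L: "(LEAST t. is_capture N (play N \<pi> s t)) = t0"
    by (rule Least_equality) (use assms not_le in blast)+
  show ?thesis using assms(1) L by (auto simp: payoff_def Let_def)
qed

lemma payoff_nc2:
  assumes "\<not> is_capture N (play N \<pi> s 0)" "\<not> is_capture N (play N \<pi> s 1)" "0 < \<gamma>" "\<gamma> < 1"
  shows "payoff N \<gamma> \<epsilon> N \<pi> s \<ge> -(\<gamma>^2)"
proof (cases "\<exists>t. is_capture N (play N \<pi> s t)")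
  case True
  define t where "t = (LEAST t. is_capture N (play N \<pi> s t))"
  have c: "is_capture N (play N \<pi> s t)" unfolding t_def using True by (metis LeastI)
  have "t \<noteq> 0" using c assms(1) by (cases t) auto
  moreover have "t \<noteq> 1" using c assms(2) by auto
  ultimately have t2: "2 \<le> t" by auto
  have "\<gamma>^t \<le> \<gamma>^2" using power_decreasing[OF t2, of \<gamma>] assms by auto
  moreover have "payoff N \<gamma> \<epsilon> N \<pi> s = -(\<gamma>^t)"
    using True by (simp add: payoff_def t_def capture_reward_def Let_def)
  ultimately show ?thesis by simp
next
  case False
  then show ?thesis by (simp add: payoff_def)
qed

lemma play_stay:
  assumes "\<And>t'. t' < t \<Longrightarrow> j + t' < N \<and> \<rho> (j+t') (xs, j+t') = xs!(j+t'-1)" "1 \<le> j"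
  shows "play N \<rho> (xs,j) t = (xs, j+t)"
  using assms(1)
proof (induction t)
  case 0
  then show ?case by simp
next
  case (Suc t)
  have ih: "play N \<rho> (xs,j) t = (xs,j+t)" using Suc by auto
  have h: "j+t<N" "\<rho> (j+t) (xs,j+t) = xs!(j+t-1)" using Suc.prems by auto
  show ?case using ih h by (simp add: Let_def)
qed

lemma states_pos_V: assumes "s \<in> states V N" "n \<in> {1..N}" shows "pos s n \<in> V"
proof -
  have "n - 1 < length (fst s)" using assms by (auto simp: states_def)
  then have "fst s ! (n-1) \<in> set (fst s)" by (rule nth_mem)
  then show ?thesis using assms by (auto simp: states_def pos_def)
qed

lemma stay_legal: "s \<in> states V N \<Longrightarrow> n \<in> {1..N} \<Longrightarrow> pos s n \<in> cnbhd V E (pos s n)"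
  using states_pos_V[of s V N n] by (simp add: cnbhd_def)

lemma inv_states: "cinv V N xs \<Longrightarrow> k \<in> {1..N} \<Longrightarrow> (xs,k) \<in> states V N"
  by (auto simp: cinv_def states_def)

lemma reward_single:
  assumes "length xs = N" "i0 \<in> {1..N-1}" "\<And>i. i \<in> {1..N-1} \<Longrightarrow> xs!(i-1) = xs!(N-1) \<longleftrightarrow> i = i0"
    "i0 \<noteq> m" "m \<noteq> N" "N \<ge> 3"
  shows "capture_reward N \<epsilon> m (xs,k) = \<epsilon> / real (N - 1 - 1)" "is_capture N (xs,k)"
proof -
  have C: "captured_cops N (xs,k) = {i0}" using assms(2,3) by (auto simp: captured_cops_def)
  show "capture_reward N \<epsilon> m (xs,k) = \<epsilon> / real (N - 1 - 1)"
  proof -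
    have "N - 1 \<noteq> 1" using assms(6) by auto
    then show ?thesis using assms(4,5,6) by (simp add: capture_reward_def C)
  qed
  show "is_capture N (xs,k)" using assms(2,3) by (auto simp: is_capture_def)
qed

lemma CR_capture:
  assumes opt: "optimal_pair V E N \<gamma> \<epsilon> N \<pi>" and j: "j \<in> {1..N-1}" and I: "cinv V N xs"
    and adj: "xs!(N-1) \<in> cnbhd V E (xs!(j-1))" and g: "0 < \<gamma>" "\<gamma> < 1"
  shows "\<pi> j (xs,j) = xs!(N-1)"
proof (rule ccontr)
  assume ne: "\<pi> j (xs,j) \<noteq> xs!(N-1)"
  define capt :: "'a strat" where "capt = (\<lambda>s. if pos s N \<in> cnbhd V E (pos s j) then pos s N else pos s j)"
  define \<rho> where "\<rho> = \<pi>(j := capt)"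
  have N: "N \<ge> 2" using j by auto
  have s: "(xs,j) \<in> states V N" using inv_states[OF I] j by auto
  have nc: "\<not> is_capture N (xs,j)" using inv_nc[OF I] .
  have lp: "legal_profile V E N \<pi>" using opt by (simp add: optimal_pair_def)
  have lc: "legal_strat V E N j capt"
    unfolding legal_strat_def capt_def using stay_legal j by fastforce
  have lr: "legal_profile V E N \<rho>"
    using lp lc by (auto simp: legal_profile_def \<rho>_def)
  have le: "payoff N \<gamma> \<epsilon> N \<pi> (xs,j) \<le> payoff N \<gamma> \<epsilon> N (\<rho>(N := \<pi> N)) (xs,j)"
    using opt s nc lr by (auto simp: optimal_pair_def)
  have jN: "j \<noteq> N" using j by auto
  have rr: "\<rho>(N := \<pi> N) = \<rho>" using jN by (auto simp: \<rho>_def)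
  have L: "length xs = N" using I by (simp add: cinv_def)
  have p1: "play N \<rho> (xs,j) 1 = (xs[j-1 := xs!(N-1)], j mod N + 1)"
    using adj by (simp add: \<rho>_def capt_def)
  have c1: "is_capture N (play N \<rho> (xs,j) 1)"
    unfolding p1 is_capture_def using j L by (auto intro!: bexI[of _ j])
  have "payoff N \<gamma> \<epsilon> N \<rho> (xs,j) = \<gamma>^1 * capture_reward N \<epsilon> N (play N \<rho> (xs,j) 1)"
    by (rule payoff_at[OF c1]) (use nc in auto)
  then have pr: "payoff N \<gamma> \<epsilon> N \<rho> (xs,j) = - \<gamma>" by (simp add: capture_reward_def)
  have q1: "play N \<pi> (xs,j) 1 = (xs[j-1 := \<pi> j (xs,j)], j mod N + 1)" by simp
  have "\<not> is_capture N (play N \<pi> (xs,j) 1)"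
    unfolding q1 is_capture_def using j L I ne by (auto simp: cinv_def nth_list_update split: if_splits)
  then have "payoff N \<gamma> \<epsilon> N \<pi> (xs,j) \<ge> -(\<gamma>^2)" using payoff_nc2 nc g by auto
  moreover have "\<gamma>^2 < \<gamma>" using g by (simp add: power2_eq_square)
  ultimately show False using le rr pr by auto
qed




lemma cop_nocapture:
  assumes sg: "simple_graph V E" and opt: "optimal_pair V E N \<gamma> \<epsilon> 1 \<pi>" and N: "N \<ge> 3"
    and j: "j \<in> {2..N-1}" and I: "cinv V N xs" and adj: "E (xs!(j-1)) (xs!(N-1))"
    and g: "0 < \<gamma>" "\<gamma> < 1" and e: "0 < \<epsilon>"
    and cs: "(\<exists>i. j < i \<and> i \<le> N-1 \<and> E (xs!(i-1)) (xs!(N-1))) \<or> (\<forall>i\<in>{1..N-1}. i \<noteq> j \<longrightarrow> xs!(i-1) \<noteq> xs!(j-1))"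
  shows "\<pi> j (xs,j) \<noteq> xs!(N-1)"
proof
  assume cap: "\<pi> j (xs,j) = xs!(N-1)"
  define c where "c = xs!(N-1)"
  define b where "b = xs!(j-1)"
  have L: "length xs = N" using I by (simp add: cinv_def)
  have s: "(xs,j) \<in> states V N" using inv_states[OF I] j by auto
  have nc: "\<not> is_capture N (xs,j)" using inv_nc[OF I] .
  have ncs: "\<And>i. i \<in> {1..N-1} \<Longrightarrow> xs!(i-1) \<noteq> c" using I by (auto simp: cinv_def c_def)
  have q: "0 < \<epsilon> / real (N - 1 - 1)" using e N by auto
  have p1: "play N \<pi> (xs,j) 1 = (xs[j-1 := c], j mod N + 1)" using cap by (simp add: c_def)
  have rs: "capture_reward N \<epsilon> 1 (xs[j-1 := c], j mod N + 1) = \<epsilon> / real (N - 1 - 1)"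
           "is_capture N (xs[j-1 := c], j mod N + 1)"
  proof -
    have "\<And>i. i \<in> {1..N-1} \<Longrightarrow> xs[j-1:=c]!(i-1) = xs[j-1:=c]!(N-1) \<longleftrightarrow> i = j"
    proof -
      fix i assume i: "i \<in> {1..N-1}"
      have "xs[j-1:=c]!(N-1) = c" unfolding c_def by (cases "j - 1 = N - 1") auto
      moreover have "xs[j-1:=c]!(i-1) = (if i = j then c else xs!(i-1))"
        using i j L by (auto simp: nth_list_update)
      ultimately show "xs[j-1:=c]!(i-1) = xs[j-1:=c]!(N-1) \<longleftrightarrow> i = j" using ncs[OF i] by auto
    qed
    then show "capture_reward N \<epsilon> 1 (xs[j-1 := c], j mod N + 1) = \<epsilon> / real (N - 1 - 1)"
           "is_capture N (xs[j-1 := c], j mod N + 1)"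
      using reward_single[of "xs[j-1:=c]" N j 1] L j N by auto
  qed
  have Pp: "payoff N \<gamma> \<epsilon> 1 \<pi> (xs,j) = \<gamma>^1 * (\<epsilon> / real (N - 1 - 1))"
    using payoff_at[of N \<pi> "(xs,j)" 1 \<gamma> \<epsilon> 1] p1 rs nc by auto
  have key: False if lr: "legal_profile V E N \<rho>" and T: "T \<ge> 2"
    and P: "payoff N \<gamma> \<epsilon> 1 (\<rho>(1 := \<pi> 1)) (xs,j) = \<gamma>^T * (\<epsilon> / real (N - 1 - 1))" for \<rho> T
  proof -
    have "payoff N \<gamma> \<epsilon> 1 \<pi> (xs,j) \<le> payoff N \<gamma> \<epsilon> 1 (\<rho>(1 := \<pi> 1)) (xs,j)"
      using opt s nc lr by (auto simp: optimal_pair_def)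
    then have "\<gamma>^1 * (\<epsilon> / real (N - 1 - 1)) \<le> \<gamma>^T * (\<epsilon> / real (N - 1 - 1))" using Pp P by simp
    then have "\<gamma>^1 \<le> \<gamma>^T" by (rule mult_right_le_imp_le[OF _ q])
    moreover have "\<gamma>^T < \<gamma>^1" using power_strict_decreasing[of 1 T \<gamma>] T g by auto
    ultimately show False by simp
  qed
  have bV: "b \<in> V" "c \<in> V" using inv_nth_V[OF I] j N by (auto simp: b_def c_def)
  have Esym: "\<And>x y. E x y \<Longrightarrow> E y x" using sg by (simp add: simple_graph_def)
  from cs show False
  proof
    assume "\<exists>i. j < i \<and> i \<le> N-1 \<and> E (xs!(i-1)) (xs!(N-1))"
    then obtain i0 where i0: "j < i0" "i0 \<le> N-1" "E (xs!(i0-1)) c" by (auto simp: c_def)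
    define \<rho> :: "nat \<Rightarrow> 'a strat" where "\<rho> = (\<lambda>n s'. if n = i0 then (if pos s' N \<in> cnbhd V E (pos s' i0) then pos s' N else pos s' i0) else pos s' n)"
    have lr: "legal_profile V E N \<rho>"
      unfolding legal_profile_def legal_strat_def \<rho>_def using stay_legal by fastforce
    define \<rho>' where "\<rho>' = \<rho>(1 := \<pi> 1)"
    have st: "play N \<rho>' (xs,j) t = (xs, j+t)" if "t \<le> i0 - j" for t
      by (rule play_stay) (use that j i0 in \<open>auto simp: \<rho>'_def \<rho>_def\<close>)
    have cinb: "c \<in> cnbhd V E (xs!(i0-1))" using bV i0 by (simp add: cnbhd_def)
    have s1: "play N \<rho>' (xs,j) (i0-j) = (xs, i0)" using st[of "i0-j"] i0 by simp
    have s2: "\<rho>' i0 (xs,i0) = c" using cinb i0 j by (simp add: \<rho>'_def \<rho>_def c_def)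
    have pT: "play N \<rho>' (xs,j) (Suc (i0-j)) = (xs[i0-1 := c], i0 mod N + 1)"
      using s1 s2 by (simp add: Let_def)
    have "\<And>i. i \<in> {1..N-1} \<Longrightarrow> xs[i0-1:=c]!(i-1) = xs[i0-1:=c]!(N-1) \<longleftrightarrow> i = i0"
    proof -
      fix i assume i: "i \<in> {1..N-1}"
      have "xs[i0-1:=c]!(N-1) = c" unfolding c_def by (cases "i0 - 1 = N - 1") auto
      moreover have "xs[i0-1:=c]!(i-1) = (if i = i0 then c else xs!(i-1))"
        using i i0 j L by (auto simp: nth_list_update)
      ultimately show "xs[i0-1:=c]!(i-1) = xs[i0-1:=c]!(N-1) \<longleftrightarrow> i = i0" using ncs[OF i] by auto
    qed
    then have rw: "capture_reward N \<epsilon> 1 (xs[i0-1 := c], i0 mod N + 1) = \<epsilon> / real (N - 1 - 1)"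
           "is_capture N (xs[i0-1 := c], i0 mod N + 1)"
      using reward_single[of "xs[i0-1:=c]" N i0 1] L j i0 N by auto
    have "payoff N \<gamma> \<epsilon> 1 \<rho>' (xs,j) = \<gamma>^(Suc (i0-j)) * capture_reward N \<epsilon> 1 (play N \<rho>' (xs,j) (Suc (i0-j)))"
    proof (rule payoff_at)
      show "is_capture N (play N \<rho>' (xs, j) (Suc (i0 - j)))" using pT rw by simp
      fix t assume "t < Suc (i0 - j)"
      then show "\<not> is_capture N (play N \<rho>' (xs, j) t)" using st[of t] inv_nc[OF I] by simp
    qed
    then have "payoff N \<gamma> \<epsilon> 1 (\<rho>(1 := \<pi> 1)) (xs,j) = \<gamma>^(Suc (i0-j)) * (\<epsilon> / real (N - 1 - 1))"
      using pT rw by (simp add: \<rho>'_def)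
    moreover have "Suc (i0 - j) \<ge> 2" using i0 by auto
    ultimately show False using key lr by blast
  next
    assume alone: "\<forall>i\<in>{1..N-1}. i \<noteq> j \<longrightarrow> xs!(i-1) \<noteq> xs!(j-1)"
    define \<rho> :: "nat \<Rightarrow> 'a strat" where "\<rho> = (\<lambda>n s'. if n = N then (if pos s' j \<in> cnbhd V E (pos s' N) then pos s' j else pos s' N) else pos s' n)"
    have lr: "legal_profile V E N \<rho>"
      unfolding legal_profile_def legal_strat_def \<rho>_def using stay_legal by fastforce
    define \<rho>' where "\<rho>' = \<rho>(1 := \<pi> 1)"
    have st: "play N \<rho>' (xs,j) t = (xs, j+t)" if "t \<le> N - j" for t
      by (rule play_stay) (use that j in \<open>auto simp: \<rho>'_def \<rho>_def\<close>)
    have binc: "b \<in> cnbhd V E c" using bV adj Esym by (simp add: cnbhd_def b_def c_def)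
    have jN: "j + (N - j) = N" using j by auto
    have s1: "play N \<rho>' (xs,j) (N-j) = (xs, N)" using st[of "N-j"] jN by simp
    have s2: "\<rho>' N (xs,N) = b" using binc j N by (simp add: \<rho>'_def \<rho>_def c_def b_def)
    have pT: "play N \<rho>' (xs,j) (Suc (N-j)) = (xs[N-1 := b], 1)"
      using s1 s2 N by (simp add: Let_def)
    have "\<And>i. i \<in> {1..N-1} \<Longrightarrow> xs[N-1:=b]!(i-1) = xs[N-1:=b]!(N-1) \<longleftrightarrow> i = j"
    proof -
      fix i assume i: "i \<in> {1..N-1}"
      have "xs[N-1:=b]!(N-1) = b" using N L by simp
      moreover have "xs[N-1:=b]!(i-1) = xs!(i-1)"
        using i N L by (auto simp: nth_list_update)
      ultimately show "xs[N-1:=b]!(i-1) = xs[N-1:=b]!(N-1) \<longleftrightarrow> i = j" using alone i by (auto simp: b_def)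
    qed
    then have rw: "capture_reward N \<epsilon> 1 (xs[N-1 := b], 1) = \<epsilon> / real (N - 1 - 1)"
           "is_capture N (xs[N-1 := b], 1)"
      using reward_single[of "xs[N-1:=b]" N j 1] L j N by auto
    have "payoff N \<gamma> \<epsilon> 1 \<rho>' (xs,j) = \<gamma>^(Suc (N-j)) * capture_reward N \<epsilon> 1 (play N \<rho>' (xs,j) (Suc (N-j)))"
    proof (rule payoff_at)
      show "is_capture N (play N \<rho>' (xs, j) (Suc (N - j)))" using pT rw by simp
      fix t assume "t < Suc (N - j)"
      then show "\<not> is_capture N (play N \<rho>' (xs, j) t)" using st[of t] inv_nc[OF I] by simp
    qed
    then have "payoff N \<gamma> \<epsilon> 1 (\<rho>(1 := \<pi> 1)) (xs,j) = \<gamma>^(Suc (N-j)) * (\<epsilon> / real (N - 1 - 1))"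
      using pT rw by (simp add: \<rho>'_def)
    moreover have "Suc (N - j) \<ge> 2" using j by auto
    ultimately show False using key lr by blast
  qed
qed




lemma escape: "E\<^sup>*\<^sup>* x y \<Longrightarrow> x \<notin> S \<Longrightarrow> y \<in> S \<Longrightarrow> \<exists>u v. E u v \<and> u \<notin> S \<and> v \<in> S"
  by (induction rule: rtranclp_induct) blast+

lemma other_nb:
  assumes sg: "simple_graph V E" and cn: "connected_graph V E" and cV: "card V \<ge> 3"
    and bc: "b \<in> V" "c \<in> V" "E b c" and only: "\<forall>w. E b w \<longrightarrow> w = c"
  shows "\<exists>w. E c w \<and> w \<noteq> b"
proof -
  have fin: "finite V" using sg by (simp add: simple_graph_def)
  obtain w where w: "w \<in> V" "w \<noteq> b" "w \<noteq> c"
  proof (rule ccontr)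
    assume "\<not> thesis"
    then have "V \<subseteq> {b,c}" using that by blast
    then have "card V \<le> card {b,c}" by (simp add: card_mono)
    also have "\<dots> \<le> 2" by (simp add: card_insert_le_m1)
    finally show False using cV by simp
  qed
  have "E\<^sup>*\<^sup>* w b" using cn w bc by (simp add: connected_graph_def)
  then obtain u v where uv: "E u v" "u \<notin> {b,c}" "v \<in> {b,c}" using escape[of E w b "{b,c}"] w by auto
  have sym: "\<And>x y. E x y \<Longrightarrow> E y x" using sg by (simp add: simple_graph_def)
  show ?thesis
  proof (cases "v = b")
    case True
    then show ?thesis using uv sym only by blast
  next
    case False
    then have "v = c" using uv by auto
    then show ?thesis using uv sym by blast
  qed
qed

lemma walk:
  assumes sg: "simple_graph V E" and path: "E\<^sup>*\<^sup>* a c" and i: "i \<in> {1..N-1}"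
  shows "\<And>xs. Rc V E N s0 xs \<Longrightarrow> cinv V N xs \<Longrightarrow> xs!(i-1) = a \<Longrightarrow> xs!(N-1) = c
     \<Longrightarrow> \<exists>b. E b c \<and> Rc V E N s0 (xs[i-1:=b]) \<and> cinv V N (xs[i-1:=b])"
  using path
proof (induction rule: converse_rtranclp_induct)
  case base
  then show ?case using i by (auto simp: cinv_def)
next
  case (step a a')
  show ?case
  proof (cases "a' = c")
    case True
    have "xs[i-1:=a] = xs" using step.prems(3) by (metis list_update_id)
    then show ?thesis using True step by metis
  next
    case False
    define xs' where "xs' = xs[i-1:=a']"
    have aV: "a' \<in> V" using sg step.hyps(1) by (simp add: simple_graph_def)
    have L: "length xs = N" using step.prems(2) by (simp add: cinv_def)
    have iN: "i - 1 \<noteq> N - 1" "i - 1 < N" using i by auto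
    have I': "cinv V N xs'"
    proof -
      have "set xs' \<subseteq> V" using step.prems(2) aV unfolding xs'_def cinv_def
        by (metis insert_subset set_update_subset_insert subset_trans)
      moreover have "\<forall>k\<in>{1..N-1}. xs'!(k-1) \<noteq> xs'!(N-1)"
      proof
        fix k assume k: "k \<in> {1..N-1}"
        have r: "xs'!(N-1) = c" using iN step.prems(4) by (simp add: xs'_def)
        show "xs'!(k-1) \<noteq> xs'!(N-1)"
        proof (cases "k = i")
          case True
          then show ?thesis using r False L iN by (simp add: xs'_def)
        next
          case False
          then have "k - 1 \<noteq> i - 1" using k i by auto
          then have "xs'!(k-1) = xs!(k-1)" by (simp add: xs'_def)
          then show ?thesis using r step.prems(2,4) k by (auto simp: cinv_def)
        qed
      qed
      ultimately show ?thesis using L by (simp add: cinv_def xs'_def)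
    qed
    have R': "Rc V E N s0 xs'"
      unfolding xs'_def
      by (rule Rstep[of V E N s0 xs i]) (use step.prems step.hyps(1) aV i I' xs'_def in \<open>auto simp: cnbhd_def\<close>)
    have "xs'!(i-1) = a'" using L iN by (simp add: xs'_def)
    moreover have "xs'!(N-1) = c" using iN step.prems(4) by (simp add: xs'_def)
    ultimately obtain b where "E b c" "Rc V E N s0 (xs'[i-1:=b])" "cinv V N (xs'[i-1:=b])"
      using step.IH R' I' by blast
    then show ?thesis by (auto simp: xs'_def)
  qed
qed




lemma inv_upd:
  assumes "cinv V N xs" "k < N" "v \<in> V" "\<forall>i\<in>{1..N-1}. xs[k:=v]!(i-1) \<noteq> xs[k:=v]!(N-1)"
  shows "cinv V N (xs[k:=v])"
proof -
  have "set (xs[k:=v]) \<subseteq> V" using assms(1,3) unfolding cinv_def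
    by (metis insert_subset set_update_subset_insert subset_trans)
  then show ?thesis using assms by (simp add: cinv_def)
qed

lemma config:
  assumes sg: "simple_graph V E" and cn: "connected_graph V E" and cV: "card V \<ge> 3"
    and N3: "N \<ge> 3" and s0: "s0 \<in> states V N" and nc0: "\<not> is_capture N s0"
  shows "\<exists>xs j. Rc V E N s0 xs \<and> cinv V N xs \<and> j \<in> {2..N-1} \<and> E (xs!(j-1)) (xs!(N-1)) \<and>
     ((\<exists>i. j < i \<and> i \<le> N-1 \<and> E (xs!(i-1)) (xs!(N-1))) \<or> (\<forall>i\<in>{1..N-1}. i \<noteq> j \<longrightarrow> xs!(i-1) \<noteq> xs!(j-1)))"
proof -
  obtain xs0 k0 where s0eq: "s0 = (xs0,k0)" by fastforce
  have I0: "cinv V N xs0" using s0 nc0 by (auto simp: s0eq states_def cinv_def is_capture_def)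
  have k0: "k0 \<in> {1..N}" using s0 by (simp add: s0eq states_def)
  have st0: "s0 \<in> reach_nc V E N s0" by (rule reach_nc.start)
  have R0: "Rc V E N s0 xs0" by (rule cycle[of xs0 k0]) (use st0 s0eq k0 I0 in auto)
  have sym: "\<And>x y. E x y \<Longrightarrow> E y x" using sg by (simp add: simple_graph_def)
  have irr: "\<And>x. \<not> E x x" using sg by (simp add: simple_graph_def)
  have EV: "\<And>x y. E x y \<Longrightarrow> x \<in> V \<and> y \<in> V" using sg by (simp add: simple_graph_def)
  define c where "c = xs0!(N-1)"
  have V0: "xs0!1 \<in> V" "c \<in> V" using inv_nth_V[OF I0] N3 by (auto simp: c_def)
  have path: "E\<^sup>*\<^sup>* (xs0!1) c" using cn V0 by (simp add: connected_graph_def)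
  have i2: "(2::nat) \<in> {1..N-1}" using N3 by auto
  obtain b where b: "E b c" and R1: "Rc V E N s0 (xs0[1:=b])" and I1: "cinv V N (xs0[1:=b])"
    using walk[OF sg path i2, of s0 xs0] R0 I0 by (auto simp: c_def)
  define xs1 where "xs1 = xs0[1:=b]"
  have L0: "length xs0 = N" using I0 by (simp add: cinv_def)
  have L1: "length xs1 = N" using L0 by (simp add: xs1_def)
  have x1: "xs1!1 = b" "xs1!(N-1) = c" using L0 N3 by (auto simp: xs1_def c_def)
  have R1': "Rc V E N s0 xs1" "cinv V N xs1" using R1 I1 by (auto simp: xs1_def)
  have nc1: "\<And>i. i \<in> {1..N-1} \<Longrightarrow> xs1!(i-1) \<noteq> c" using R1'(2) x1 by (auto simp: cinv_def)
  have bV: "b \<in> V" using EV b by auto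
  show ?thesis
  proof (cases "\<exists>i. 2 < i \<and> i \<le> N-1 \<and> E (xs1!(i-1)) c")
    case True
    then show ?thesis using R1' x1 b N3
      by (intro exI[of _ xs1] exI[of _ 2]) auto
  next
    case nA: False
    show ?thesis
    proof (cases "\<forall>i\<in>{1..N-1}. i \<noteq> 2 \<longrightarrow> xs1!(i-1) \<noteq> b")
      case True
      then show ?thesis using R1' x1 b N3
        by (intro exI[of _ xs1] exI[of _ 2]) auto
    next
      case False
      have oth: "\<And>i. i \<in> {3..N-1} \<Longrightarrow> xs1!(i-1) \<noteq> b" using nA b by force
      from False obtain i where i: "i \<in> {1..N-1}" "i \<noteq> 2" "xs1!(i-1) = b" by blast
      have "i = 1"
      proof (rule ccontr)
        assume "i \<noteq> 1"
        then have "i \<in> {3..N-1}" using i by auto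
        then show False using oth i by blast
      qed
      then have bb: "xs1!0 = b" using i by simp
      show ?thesis
      proof (cases "\<exists>w. E b w \<and> w \<noteq> c")
        case True
        then obtain w where w: "E b w" "w \<noteq> c" by blast
        have wV: "w \<in> V" using EV w by auto
        have wb: "w \<noteq> b" using w irr by auto
        define xs2 where "xs2 = xs1[0:=w]"
        have x2: "xs2!0 = w" "xs2!1 = b" "xs2!(N-1) = c" using L1 N3 x1 by (auto simp: xs2_def)
        have x2o: "\<And>i. i \<in> {2..N} \<Longrightarrow> xs2!(i-1) = xs1!(i-1)" by (auto simp: xs2_def)
        have I2: "cinv V N xs2" unfolding xs2_def
        proof (rule inv_upd[OF R1'(2)])
          show "0 < N" "w \<in> V" using N3 wV by auto
          show "\<forall>i\<in>{1..N-1}. xs1[0:=w]!(i-1) \<noteq> xs1[0:=w]!(N-1)"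
          proof
            fix i assume i: "i \<in> {1..N-1}"
            have "xs2!(i-1) \<noteq> xs2!(N-1)"
            proof (cases "i = 1")
              case True then show ?thesis using x2 w(2) by simp
            next
              case False
              then have "i \<in> {2..N}" using i by auto
              then have "xs2!(i-1) = xs1!(i-1)" by (rule x2o)
              then show ?thesis using x2 nc1[OF i] by simp
            qed
            then show "xs1[0:=w]!(i-1) \<noteq> xs1[0:=w]!(N-1)" by (simp add: xs2_def)
          qed
        qed
        have R2: "Rc V E N s0 xs2" unfolding xs2_def
          using Rstep[of V E N s0 xs1 1 w] R1' I2 w wV bb N3 by (auto simp: cnbhd_def xs2_def)
        show ?thesis
        proof (intro exI[of _ xs2] exI[of _ 2] conjI)
          show "E (xs2!(2-1)) (xs2!(N-1))" using x2 b by simp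
          show "(\<exists>i. 2 < i \<and> i \<le> N-1 \<and> E (xs2!(i-1)) (xs2!(N-1))) \<or> (\<forall>i\<in>{1..N-1}. i \<noteq> 2 \<longrightarrow> xs2!(i-1) \<noteq> xs2!(2-1))"
          proof (rule disjI2, intro ballI impI)
            fix i assume i: "i \<in> {1..N-1}" "i \<noteq> 2"
            show "xs2!(i-1) \<noteq> xs2!(2-1)"
            proof (cases "i = 1")
              case True then show ?thesis using x2 wb by simp
            next
              case False
              then have i3: "i \<in> {3..N-1}" using i by auto
              then have "i \<in> {2..N}" by auto
              then have "xs2!(i-1) = xs1!(i-1)" by (rule x2o)
              moreover have "xs1!(i-1) \<noteq> b" using oth[OF i3] .
              moreover have "xs2!(2-1) = b" using x2 by simp
              ultimately show ?thesis by simp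
            qed
          qed
        qed (use R2 I2 N3 in auto)
      next
        case False
        then have only: "\<forall>w. E b w \<longrightarrow> w = c" by blast
        obtain w where w: "E c w" "w \<noteq> b" using other_nb[OF sg cn cV bV V0(2) b only] by blast
        have wV: "w \<in> V" using EV w by auto
        have wc: "w \<noteq> c" using w irr by auto
        have free: "\<And>i. i \<in> {1..N-1} \<Longrightarrow> xs1!(i-1) \<noteq> w"
        proof -
          fix i assume i: "i \<in> {1..N-1}"
          show "xs1!(i-1) \<noteq> w"
          proof (cases "i \<le> 2")
            case True
            then have "i = 1 \<or> i = 2" using i by auto
            then show ?thesis using bb x1 w by auto
          next
            case False
            then show ?thesis using nA i w sym by auto
          qed
        qed
        define xs2 where "xs2 = xs1[N-1:=w]"
        have x2: "xs2!1 = b" "xs2!(N-1) = w" using L1 N3 x1 by (auto simp: xs2_def)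
        have x2o: "\<And>i. i \<in> {1..N-1} \<Longrightarrow> xs2!(i-1) = xs1!(i-1)" by (auto simp: xs2_def)
        have I2: "cinv V N xs2" unfolding xs2_def
        proof (rule inv_upd[OF R1'(2)])
          show "N - 1 < N" "w \<in> V" using N3 wV by auto
          have "\<forall>i\<in>{1..N-1}. xs2!(i-1) \<noteq> xs2!(N-1)"
            using x2 x2o free by auto
          then show "\<forall>i\<in>{1..N-1}. xs1[N-1:=w]!(i-1) \<noteq> xs1[N-1:=w]!(N-1)"
            by (simp add: xs2_def)
        qed
        have R2: "Rc V E N s0 xs2" unfolding xs2_def
          using Rstep[of V E N s0 xs1 N w] R1' I2 w wV x1 N3 by (auto simp: cnbhd_def xs2_def)
        define xs3 where "xs3 = xs2[1:=c]"
        have L2: "length xs2 = N" using L1 by (simp add: xs2_def)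
        have x3: "xs3!1 = c" "xs3!(N-1) = w" using L2 N3 x2 by (auto simp: xs3_def)
        have x3o: "\<And>i. i \<in> {1..N-1} \<Longrightarrow> i \<noteq> 2 \<Longrightarrow> xs3!(i-1) = xs1!(i-1)"
          using x2o by (auto simp: xs3_def)
        have I3: "cinv V N xs3" unfolding xs3_def
        proof (rule inv_upd[OF I2])
          show "1 < N" "c \<in> V" using N3 V0 by auto
          show "\<forall>i\<in>{1..N-1}. xs2[1:=c]!(i-1) \<noteq> xs2[1:=c]!(N-1)"
          proof
            fix i assume i: "i \<in> {1..N-1}"
            have "xs3!(i-1) \<noteq> xs3!(N-1)"
            proof (cases "i = 2")
              case True then show ?thesis using x3 wc by simp
            next
              case False
              then have "xs3!(i-1) = xs1!(i-1)" using x3o i by blast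
              then show ?thesis using x3 free[OF i] by simp
            qed
            then show "xs2[1:=c]!(i-1) \<noteq> xs2[1:=c]!(N-1)" by (simp add: xs3_def)
          qed
        qed
        have R3: "Rc V E N s0 xs3" unfolding xs3_def
          using Rstep[of V E N s0 xs2 2 c] R2 I2 I3 b V0 x2 N3 by (auto simp: cnbhd_def xs3_def)
        show ?thesis
        proof (intro exI[of _ xs3] exI[of _ 2] conjI)
          show "E (xs3!(2-1)) (xs3!(N-1))" using x3 w by simp
          show "(\<exists>i. 2 < i \<and> i \<le> N-1 \<and> E (xs3!(i-1)) (xs3!(N-1))) \<or> (\<forall>i\<in>{1..N-1}. i \<noteq> 2 \<longrightarrow> xs3!(i-1) \<noteq> xs3!(2-1))"
            using x3 x3o nc1 by auto
        qed (use R3 I3 N3 in auto)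
      qed
    qed
  qed
qed


theorem mainTheorem4:
  fixes V :: "'v set" and E :: "'v \<Rightarrow> 'v \<Rightarrow> bool" and N :: nat
    and \<gamma> \<epsilon> :: real and s0 :: "'v state" and \<phi> :: "nat \<Rightarrow> nat \<Rightarrow> 'v strat"
  assumes "simple_graph V E" and "connected_graph V E" and "card V \<ge> 3"
    and "N \<ge> 3"
    and "0 < \<epsilon>" and "\<epsilon> \<le> 1 / real (N - 1)"
    and "s0 \<in> states V N" and "\<not> is_capture N s0"
    and "0 < \<gamma>" and "\<gamma> < 1"
    and "\<forall>m\<in>{1..N}. optimal_pair V E N \<gamma> \<epsilon> m (\<lambda>n. \<phi> n m)"
  shows "\<not> trigger_positional V E N \<gamma> \<epsilon> s0 \<phi>"
proof
  assume tp: "trigger_positional V E N \<gamma> \<epsilon> s0 \<phi>"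
  obtain xs j where R: "Rc V E N s0 xs" and I: "cinv V N xs" and j: "j \<in> {2..N-1}"
    and adj: "E (xs!(j-1)) (xs!(N-1))"
    and cs: "(\<exists>i. j < i \<and> i \<le> N-1 \<and> E (xs!(i-1)) (xs!(N-1))) \<or> (\<forall>i\<in>{1..N-1}. i \<noteq> j \<longrightarrow> xs!(i-1) \<noteq> xs!(j-1))"
    using config[OF assms(1,2,3,4,7,8)] by blast
  have jN: "j \<in> {1..N}" "(1::nat) \<in> {1..N}" using j assms(4) by auto
  obtain \<sigma> where \<sigma>: "\<sigma> \<in> CR_optimal V E N \<gamma> \<epsilon> j"
    and ag: "\<forall>s\<in>reach_nc V E N s0. mover s = j \<and> \<not> is_capture N s \<longrightarrow> \<phi> j 1 s = \<sigma> s"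
    using tp jN unfolding trigger_positional_def by blast
  have r: "(xs,j) \<in> reach_nc V E N s0" using R jN by (simp add: Rc_def)
  have e1: "\<phi> j 1 (xs,j) = \<sigma> (xs,j)" using ag r inv_nc[OF I] by simp
  obtain \<pi>' where op: "optimal_pair V E N \<gamma> \<epsilon> N \<pi>'" and sp: "\<pi>' j = \<sigma>"
    using \<sigma> unfolding CR_optimal_def by blast
  have cV: "xs!(N-1) \<in> V" using inv_nth_V[OF I] assms(4) by auto
  have cn: "xs!(N-1) \<in> cnbhd V E (xs!(j-1))" using adj cV by (simp add: cnbhd_def)
  have j1: "j \<in> {1..N-1}" using j by auto
  have e2: "\<pi>' j (xs,j) = xs!(N-1)" by (rule CR_capture[OF op j1 I cn assms(9,10)])
  have op1: "optimal_pair V E N \<gamma> \<epsilon> 1 (\<lambda>n. \<phi> n 1)" using assms(11) jN by blast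
  have "(\<lambda>n. \<phi> n 1) j (xs,j) \<noteq> xs!(N-1)"
    by (rule cop_nocapture[OF assms(1) op1 assms(4) j I adj assms(9,10,5) cs])
  then show False using e1 e2 sp by simp
qed

end
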